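(* Let $n\ge1$, $q\in\mathbb{C}$ with $0<|q|<1$, and $0<r<\frac{1-|q|}{|1-q|}$. For every $\sigma\in\mathbb{S}_n$, $$\Big(\frac{1}{2\pi i}\Big)^n\oint_{\mathcal{C}_r}\cdots\oint_{\mathcal{C}_r}A_\sigma\prod_{i=1}^n z_i^{-1}\,dz_1\cdots dz_n=q^{\mathrm{inv}(\sigma)},$$ where $\mathrm{inv}(\sigma)$ is the number of inversions of $\sigma$.
   Context: $\mathcal{C}_r$ is the positively oriented circle of radius $r$ centered at $0$. For $1\le\alpha<\beta\le n$ put $S_{\beta\alpha}=-\dfrac{z_\beta-qz_\alpha-(1-q)z_\alpha z_\beta}{z_\alpha-qz_\beta-(1-q)z_\alpha z_\beta}$. An inversion of $\sigma\in\mathbb{S}_n$ is a pair $(\alpha,\beta)$ with $1\le\alpha<\beta\le n$ and $\sigma^{-1}(\beta)<\sigma^{-1}(\alpha)$. $A_\sigma=\prod_{(\alpha,\beta)\text{ inversion of }\sigma}S_{\beta\alpha}$. *)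

theory Defs
  imports "HOL-Analysis.Analysis" "HOL-Combinatorics.Permutations"
begin

definition circle_integral :: "real \<Rightarrow> (complex \<Rightarrow> complex) \<Rightarrow> complex" where
  "circle_integral r f =
     integral {0..1} (\<lambda>t::real. f (of_real r * exp (2 * of_real pi * \<i> * of_real t))
                         * (2 * of_real pi * \<i> * of_real r * exp (2 * of_real pi * \<i> * of_real t)))"

text \<open>Iterated contour integral over C_r in the variables z_1, ..., z_k
  (z_1 innermost, z_k outermost); variables are stored in a function nat => complex.\<close>
fun iter_circle_integral :: "real \<Rightarrow> nat \<Rightarrow> ((nat \<Rightarrow> complex) \<Rightarrow> complex) \<Rightarrow> complex" where
  "iter_circle_integral r 0 F = F (\<lambda>_. 0)"
| "iter_circle_integral r (Suc k) F =
     circle_integral r (\<lambda>w. iter_circle_integral r k (\<lambda>z. F (z(Suc k := w))))"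

definition S_fac :: "complex \<Rightarrow> (nat \<Rightarrow> complex) \<Rightarrow> nat \<Rightarrow> nat \<Rightarrow> complex" where
  "S_fac q z \<beta> \<alpha> =
     - ((z \<beta> - q * z \<alpha> - (1 - q) * z \<alpha> * z \<beta>) / (z \<alpha> - q * z \<beta> - (1 - q) * z \<alpha> * z \<beta>))"

definition inversions :: "nat \<Rightarrow> (nat \<Rightarrow> nat) \<Rightarrow> (nat \<times> nat) set" where
  "inversions n \<sigma> = {(\<alpha>, \<beta>). 1 \<le> \<alpha> \<and> \<alpha> < \<beta> \<and> \<beta> \<le> n \<and> inv \<sigma> \<beta> < inv \<sigma> \<alpha>}"

definition A_perm :: "complex \<Rightarrow> nat \<Rightarrow> (nat \<Rightarrow> nat) \<Rightarrow> (nat \<Rightarrow> complex) \<Rightarrow> complex" where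
  "A_perm q n \<sigma> z = (\<Prod>(\<alpha>, \<beta>)\<in>inversions n \<sigma>. S_fac q z \<beta> \<alpha>)"

end

theory Submission imports Defs begin

definition C1 :: "complex set \<Rightarrow> (complex \<Rightarrow> complex) \<Rightarrow> bool" where
  "C1 S f \<longleftrightarrow> (\<exists>f'. (\<forall>x\<in>S. (f has_field_derivative f' x) (at x)) \<and> continuous_on S f')"

lemma C1_cont: "C1 S f \<Longrightarrow> continuous_on S f"
  unfolding C1_def by (meson DERIV_continuous continuous_at_imp_continuous_on)

lemma C1_const: "C1 S (\<lambda>w. c)"
  unfolding C1_def by (rule exI[of _ "\<lambda>_. 0"]) (auto intro: continuous_intros)

lemma C1_id: "C1 S (\<lambda>w. w)"
  unfolding C1_def by (rule exI[of _ "\<lambda>_. 1"]) (auto intro: continuous_intros)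

lemma C1_add: assumes "C1 S f" "C1 S g" shows "C1 S (\<lambda>w. f w + g w)"
proof -
  from assms obtain f' g' where f: "\<forall>x\<in>S. (f has_field_derivative f' x) (at x)" "continuous_on S f'"
    and g: "\<forall>x\<in>S. (g has_field_derivative g' x) (at x)" "continuous_on S g'"
    unfolding C1_def by blast
  show ?thesis unfolding C1_def
    by (rule exI[of _ "\<lambda>x. f' x + g' x"]) (use f g in \<open>auto intro!: derivative_eq_intros continuous_intros\<close>)
qed

lemma C1_minus: assumes "C1 S f" shows "C1 S (\<lambda>w. - f w)"
proof -
  from assms obtain f' where f: "\<forall>x\<in>S. (f has_field_derivative f' x) (at x)" "continuous_on S f'"
    unfolding C1_def by blast
  show ?thesis unfolding C1_def
    by (rule exI[of _ "\<lambda>x. - f' x"]) (use f in \<open>auto intro!: derivative_eq_intros continuous_intros\<close>)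
qed

lemma C1_diff: assumes "C1 S f" "C1 S g" shows "C1 S (\<lambda>w. f w - g w)"
  using C1_add[OF assms(1) C1_minus[OF assms(2)]] by simp

lemma C1_mult: assumes "C1 S f" "C1 S g" shows "C1 S (\<lambda>w. f w * g w)"
proof -
  have cf: "continuous_on S f" and cg: "continuous_on S g" using assms C1_cont by auto
  from assms obtain f' g' where f: "\<forall>x\<in>S. (f has_field_derivative f' x) (at x)" "continuous_on S f'"
    and g: "\<forall>x\<in>S. (g has_field_derivative g' x) (at x)" "continuous_on S g'"
    unfolding C1_def by blast
  show ?thesis unfolding C1_def
    by (rule exI[of _ "\<lambda>x. f' x * g x + f x * g' x"])
      (use f g cf cg in \<open>auto intro!: derivative_eq_intros continuous_intros\<close>)
qed

lemma C1_divide: assumes "C1 S f" "C1 S g" "\<And>x. x \<in> S \<Longrightarrow> g x \<noteq> 0"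
  shows "C1 S (\<lambda>w. f w / g w)"
proof -
  have cf: "continuous_on S f" and cg: "continuous_on S g" using assms C1_cont by auto
  from assms obtain f' g' where f: "\<forall>x\<in>S. (f has_field_derivative f' x) (at x)" "continuous_on S f'"
    and g: "\<forall>x\<in>S. (g has_field_derivative g' x) (at x)" "continuous_on S g'"
    unfolding C1_def by blast
  show ?thesis unfolding C1_def
    by (rule exI[of _ "\<lambda>x. (f' x * g x - f x * g' x) / (g x * g x)"])
      (use f g cf cg assms(3) in \<open>auto intro!: derivative_eq_intros continuous_intros\<close>)
qed

lemma C1_prod: assumes "finite A" "\<And>a. a \<in> A \<Longrightarrow> C1 S (f a)"
  shows "C1 S (\<lambda>w. \<Prod>a\<in>A. f a w)"
  using assms
proof (induction A rule: finite_induct)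
  case empty then show ?case by (simp add: C1_const)
next
  case (insert x F)
  then show ?case by (simp add: C1_mult)
qed

definition ee :: "real \<Rightarrow> complex" where
  "ee t = exp (2 * of_real pi * \<i> * of_real t)"

lemma norm_ee [simp]: "norm (ee t) = 1"
  unfolding ee_def by (simp add: norm_exp_eq_Re)

lemma ee_0 [simp]: "ee 0 = 1" and ee_1 [simp]: "ee 1 = 1"
  unfolding ee_def by simp_all

lemma ee_deriv: "(ee has_vector_derivative (2 * of_real pi * \<i> * ee t)) (at t within X)"
proof -
  have "((\<lambda>x. exp (2 * of_real pi * \<i> * x)) has_field_derivative (2 * of_real pi * \<i> * exp (2 * of_real pi * \<i> * of_real t))) (at (of_real t))"
    by (auto intro!: derivative_eq_intros)
  from has_vector_derivative_real_field[OF this] show ?thesis unfolding ee_def .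
qed

lemma cont_ee [continuous_intros]: "continuous_on X g \<Longrightarrow> continuous_on X (\<lambda>x. ee (g x))"
  unfolding ee_def by (intro continuous_intros)

lemma int_ee: "integral {0..1} ee = 0"
proof -
  have "((\<lambda>t. ee t / (2 * of_real pi * \<i>)) has_vector_derivative ee t) (at t within {0..1})" for t
    using ee_deriv[of t "{0..1}"] by (auto intro!: derivative_eq_intros)
  then have "(ee has_integral (ee 1 / (2 * of_real pi * \<i>) - ee 0 / (2 * of_real pi * \<i>))) {0..1}"
    by (intro fundamental_theorem_of_calculus) auto
  then show ?thesis by (simp add: integral_unique)
qed

lemma mvp:
  assumes C: "C1 (ball 0 R) f" and r: "0 < r" "r < R"
  shows "integral {0..1} (\<lambda>u. f (of_real r * ee u)) = f 0"
proof -
  from C obtain f' where fd: "\<And>x. x \<in> ball 0 R \<Longrightarrow> (f has_field_derivative f' x) (at x)"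
    and cf': "continuous_on (ball 0 R) f'"
    unfolding C1_def by blast
  have cf: "continuous_on (ball 0 R) f" using C C1_cont by blast
  have inb: "of_real s * ee u \<in> ball 0 R" if "s \<in> {0..r}" for s u
    using that r by (simp add: norm_mult)
  define h where "h s = integral (cbox 0 1) (\<lambda>u. f (of_real s * ee u))" for s
  have hd: "(h has_vector_derivative integral (cbox 0 1) (\<lambda>u. f' (of_real s * ee u) * ee u)) (at s within {0..r})"
    if s: "s \<in> {0..r}" for s
    unfolding h_def
  proof (rule leibniz_rule_vector_derivative)
    fix x t assume x: "x \<in> {0..r}" and t: "t \<in> cbox (0::real) 1"
    have "((\<lambda>w. f (w * ee t)) has_field_derivative (f' (of_real x * ee t) * ee t)) (at (of_real x))"
      proof -
      have *: "(f has_field_derivative f' (of_real x * ee t)) (at ((\<lambda>w. w * ee t) (of_real x)))"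
        using fd[OF inb[OF x]] by simp
      show ?thesis by (rule DERIV_chain2[where f=f and g="\<lambda>w. w * ee t", OF *]) (auto intro!: derivative_eq_intros)
    qed
    from has_vector_derivative_real_field[OF this]
    show "((\<lambda>x. f (of_real x * ee t)) has_vector_derivative f' (of_real x * ee t) * ee t) (at x within {0..r})" .
  next
    fix x assume x: "x \<in> {0..r}"
    have "continuous_on (cbox 0 1) (\<lambda>u. f (of_real x * ee u))"
      by (rule continuous_on_compose2[OF cf]) (auto intro!: continuous_intros inb x)
    then show "(\<lambda>u. f (of_real x * ee u)) integrable_on cbox 0 1"
      by (rule integrable_continuous)
  next
    have "continuous_on ({0..r} \<times> cbox 0 1) (\<lambda>p. f' (of_real (fst p) * ee (snd p)))"
      by (rule continuous_on_compose2[OF cf']) (auto intro!: continuous_intros inb)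
    then show "continuous_on ({0..r} \<times> cbox 0 1) (\<lambda>(x, t). f' (of_real x * ee t) * ee t)"
      by (auto simp: split_beta intro!: continuous_intros)
  qed (use s in auto)
  have zero: "integral (cbox 0 1) (\<lambda>u. f' (of_real s * ee u) * ee u) = 0" if s: "s \<in> {0..r}" for s
  proof (cases "s = 0")
    case True
    then show ?thesis using int_ee by (simp flip: interval_cbox)
  next
    case False
    with s have sp: "s > 0" by auto
    define g where "g u = f (of_real s * ee u)" for u
    have gd: "(g has_vector_derivative (f' (of_real s * ee u) * (of_real s * (2 * of_real pi * \<i> * ee u)))) (at u within {0..1})" for u
    proof -
      have d1: "((\<lambda>u. of_real s * ee u) has_vector_derivative (of_real s * (2 * of_real pi * \<i> * ee u))) (at u within {0..1})"
        using ee_deriv[of u "{0..1}"] by (auto intro!: derivative_eq_intros)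
      have d2: "(f has_field_derivative f' (of_real s * ee u)) (at (of_real s * ee u) within (\<lambda>u. of_real s * ee u) ` {0..1})"
        using fd[OF inb[OF s]] by (rule has_field_derivative_at_within)
      from field_vector_diff_chain_within[OF d1 d2]
      show ?thesis unfolding g_def by (simp add: o_def mult.commute)
    qed
    have "((\<lambda>u. f' (of_real s * ee u) * (of_real s * (2 * of_real pi * \<i> * ee u))) has_integral (g 1 - g 0)) {0..1}"
      by (intro fundamental_theorem_of_calculus gd) auto
    then have "integral {0..1} (\<lambda>u. f' (of_real s * ee u) * (of_real s * (2 * of_real pi * \<i> * ee u))) = 0"
      by (simp add: integral_unique g_def)
    moreover have "(\<lambda>u. f' (of_real s * ee u) * (of_real s * (2 * of_real pi * \<i> * ee u)))
       = (\<lambda>u. (of_real s * (2 * of_real pi * \<i>)) * (f' (of_real s * ee u) * ee u))"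
      by (simp add: fun_eq_iff algebra_simps)
    ultimately have "integral {0..1} (\<lambda>u. (of_real s * (2 * of_real pi * \<i>)) * (f' (of_real s * ee u) * ee u)) = 0"
      by simp
    then show ?thesis using sp by (simp flip: interval_cbox)
  qed
  have "\<exists>c. \<forall>x\<in>{0..r}. h x = c"
  proof (rule has_derivative_zero_constant)
    fix x assume "x \<in> {0..r}"
    with hd[OF this] zero[OF this] show "(h has_derivative (\<lambda>h. 0)) (at x within {0..r})"
      by (simp add: has_vector_derivative_def)
  qed auto
  then have "h r = h 0" using r by auto
  then show ?thesis by (simp add: h_def flip: interval_cbox)
qed

lemma cont_coord [continuous_intros]: "continuous_on S (\<lambda>x. x i :: 'b::topological_space)"
  by (rule continuous_on_subset[OF continuous_on_product_coordinates]) auto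

lemma cont_fst_coord [continuous_intros]: "continuous_on S (\<lambda>x. fst x i :: 'b::topological_space)"
  by (rule continuous_on_compose2[OF continuous_on_product_coordinates, of S fst]) (auto intro: continuous_intros)

fun Itb :: "real \<Rightarrow> nat \<Rightarrow> ((nat \<Rightarrow> complex) \<Rightarrow> complex) \<Rightarrow> (nat \<Rightarrow> complex) \<Rightarrow> complex" where
  "Itb r 0 F b = F b"
| "Itb r (Suc m) F b = integral {0..1} (\<lambda>t. Itb r m F (b(Suc m := of_real r * ee t)))"

definition Tor :: "real \<Rightarrow> nat set \<Rightarrow> (nat \<Rightarrow> complex) set" where
  "Tor r I = {z. \<forall>i\<in>I. norm (z i) = r}"

lemma Tor_upd: "0 \<le> r \<Longrightarrow> b \<in> Tor r (I - {k}) \<Longrightarrow> b(k := of_real r * ee t) \<in> Tor r I"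
  by (auto simp: Tor_def norm_mult)

lemma Itb_cong:
  assumes "0 \<le> r" "\<And>z. z \<in> Tor r I \<Longrightarrow> F z = G z" "b \<in> Tor r (I - {1..m})"
  shows "Itb r m F b = Itb r m G b"
  using assms(3)
proof (induction m arbitrary: b)
  case 0 then show ?case using assms(2) by simp
next
  case (Suc m)
  have mem: "b(Suc m := of_real r * ee t) \<in> Tor r (I - {1..m})" for t
    by (rule Tor_upd[OF assms(1)]) (use Suc.prems in \<open>auto simp: Tor_def\<close>)
  show ?case unfolding Itb.simps by (rule integral_cong) (rule Suc.IH[OF mem])
qed

lemma Itb_mult: "Itb r m (\<lambda>z. c * F z) b = c * Itb r m F b"
  by (induction m arbitrary: b) simp_all

lemma cont_upd [continuous_intros]:
  assumes "continuous_on S f" "continuous_on S g"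
  shows "continuous_on S (\<lambda>x. (f x) (k := g x))"
proof (rule continuous_on_coordinatewise_then_product)
  fix i show "continuous_on S (\<lambda>x. ((f x)(k := g x)) i)"
    by (cases "i = k") (auto intro!: continuous_intros assms continuous_on_product_then_coordinatewise[OF assms(1)])
qed

lemma Itb_cont:
  assumes r: "0 \<le> r" and F: "continuous_on (Tor r I) F"
  shows "continuous_on (Tor r (I - {1..m})) (Itb r m F)"
proof (induction m)
  case 0 then show ?case using F by (simp add: fun_eq_iff)
next
  case (Suc m)
  have eq: "Itb r (Suc m) F = (\<lambda>b. integral (cbox 0 1) (\<lambda>t. Itb r m F (b(Suc m := of_real r * ee t))))"
    by (simp add: fun_eq_iff flip: interval_cbox)
  have "continuous_on (Tor r (I - {1..Suc m}) \<times> cbox 0 1) (\<lambda>p. Itb r m F ((fst p)(Suc m := of_real r * ee (snd p))))"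
  proof (rule continuous_on_compose2[OF Suc.IH])
    show "continuous_on (Tor r (I - {1..Suc m}) \<times> cbox 0 1) (\<lambda>p. (fst p)(Suc m := of_real r * ee (snd p)))"
      by (intro continuous_intros)
    show "(\<lambda>p. (fst p)(Suc m := of_real r * ee (snd p))) ` (Tor r (I - {1..Suc m}) \<times> cbox 0 1) \<subseteq> Tor r (I - {1..m})"
      using r by (auto simp: Tor_def norm_mult)
  qed
  then show ?case unfolding eq
    by (intro integral_continuous_on_param) (simp add: split_beta)
qed

lemma Itb_swap:
  assumes r: "0 \<le> r" and F: "continuous_on (Tor r I) F" and j: "j \<in> I" "j \<notin> {1..m}"
    and b: "b \<in> Tor r (I - {1..m} - {j})"
  shows "integral {0..1} (\<lambda>u. Itb r m F (b(j := of_real r * ee u)))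
       = Itb r m (\<lambda>z. integral {0..1} (\<lambda>u. F (z(j := of_real r * ee u)))) b"
  using j b
proof (induction m arbitrary: b)
  case 0 then show ?case by simp
next
  case (Suc m)
  have jm: "j \<noteq> Suc m" using Suc.prems by auto
  define K where "K u t = Itb r m F ((b(Suc m := of_real r * ee t))(j := of_real r * ee u))" for u t
  have cK: "continuous_on (cbox (0, 0) (1, 1)) (\<lambda>(u, t). K u t)"
  proof -
    have "continuous_on (cbox (0::real, 0::real) (1, 1)) (\<lambda>p. Itb r m F ((b(Suc m := of_real r * ee (snd p)))(j := of_real r * ee (fst p))))"
    proof (rule continuous_on_compose2[OF Itb_cont[OF r F, of m]])
      show "continuous_on (cbox (0::real, 0::real) (1, 1)) (\<lambda>p. (b(Suc m := of_real r * ee (snd p)))(j := of_real r * ee (fst p)))"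
        by (intro continuous_intros)
      show "(\<lambda>p. (b(Suc m := of_real r * ee (snd p)))(j := of_real r * ee (fst p))) ` cbox (0, 0) (1, 1) \<subseteq> Tor r (I - {1..m})"
        using r Suc.prems by (auto simp: Tor_def norm_mult)
    qed
    then show ?thesis by (simp add: K_def split_beta)
  qed
  have "integral {0..1} (\<lambda>u. Itb r (Suc m) F (b(j := of_real r * ee u)))
      = integral (cbox 0 1) (\<lambda>u. integral (cbox 0 1) (\<lambda>t. K u t))"
    using jm by (simp add: K_def fun_upd_twist flip: interval_cbox)
  also have "\<dots> = integral (cbox 0 1) (\<lambda>t. integral (cbox 0 1) (\<lambda>u. K u t))"
    by (rule integral_swap_continuous[OF cK])
  also have "\<dots> = integral (cbox 0 1) (\<lambda>t. Itb r m (\<lambda>z. integral {0..1} (\<lambda>u. F (z(j := of_real r * ee u)))) (b(Suc m := of_real r * ee t)))"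
  proof (rule integral_cong)
    fix t
    have mem: "b(Suc m := of_real r * ee t) \<in> Tor r (I - {1..m} - {j})"
      using Suc.prems r by (auto simp: Tor_def norm_mult)
    have "integral {0..1} (\<lambda>u. Itb r m F ((b(Suc m := of_real r * ee t))(j := of_real r * ee u))) = 
       Itb r m (\<lambda>z. integral {0..1} (\<lambda>u. F (z(j := of_real r * ee u)))) (b(Suc m := of_real r * ee t))"
      by (rule Suc.IH[OF _ _ mem]) (use Suc.prems in auto)
    then show "integral (cbox 0 1) (\<lambda>u. K u t) = Itb r m (\<lambda>z. integral {0..1} (\<lambda>u. F (z(j := of_real r * ee u)))) (b(Suc m := of_real r * ee t))"
      by (simp add: K_def flip: interval_cbox)
  qed
  also have "\<dots> = Itb r (Suc m) (\<lambda>z. integral {0..1} (\<lambda>u. F (z(j := of_real r * ee u)))) b"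
    by (simp flip: interval_cbox)
  finally show ?case .
qed

definition FE :: "complex \<Rightarrow> (nat \<times> nat) set \<Rightarrow> (nat \<Rightarrow> complex) \<Rightarrow> complex" where
  "FE q E z = (\<Prod>(a, b)\<in>E. S_fac q z b a)"

lemma denom_nz:
  fixes q za zb :: complex
  assumes r: "0 < r" and K: "norm q + norm (1 - q) * r < 1" and q: "q \<noteq> 0"
    and a: "norm za = r" and b: "norm zb < r / (norm q + norm (1 - q) * r)"
  shows "za - q * zb - (1 - q) * za * zb \<noteq> 0"
proof
  assume "za - q * zb - (1 - q) * za * zb = 0"
  then have "za = zb * (q + (1 - q) * za)" by (simp add: algebra_simps)
  then have "r = norm zb * norm (q + (1 - q) * za)" using a by (metis norm_mult)
  also have "norm (q + (1 - q) * za) \<le> norm q + norm (1 - q) * r"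
    using norm_triangle_ineq[of q "(1 - q) * za"] a by (simp add: norm_mult)
  then have "norm zb * norm (q + (1 - q) * za) \<le> norm zb * (norm q + norm (1 - q) * r)"
    by (simp add: mult_left_mono)
  also have "\<dots> < r"
  proof -
    have Kp: "norm q + norm (1 - q) * r > 0" using q r by (simp add: add_pos_nonneg)
    show ?thesis using b Kp by (simp add: field_simps)
  qed
  finally show False by simp
qed

lemma FE_cont:
  assumes r: "0 < r" and K: "norm q + norm (1 - q) * r < 1" and q: "q \<noteq> 0"
    and E: "E \<subseteq> {(a, b). 1 \<le> a \<and> a < b \<and> b \<le> n}"
  shows "continuous_on (Tor r {1..n}) (FE q E)"
proof -
  have lt: "r < r / (norm q + norm (1 - q) * r)"
  proof -
    have Kp: "norm q + norm (1 - q) * r > 0" using q r by (simp add: add_pos_nonneg)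
    have "r * (norm q + norm (1 - q) * r) < r * 1" by (rule mult_strict_left_mono[OF K r])
    then show ?thesis by (simp add: pos_less_divide_eq[OF Kp])
  qed
  have "continuous_on (Tor r {1..n}) (\<lambda>z. \<Prod>p\<in>E. S_fac q z (snd p) (fst p))"
  proof (intro continuous_on_prod)
    fix p assume p: "p \<in> E"
    then have ab: "fst p \<in> {1..n}" "snd p \<in> {1..n}" using E by auto
    show "continuous_on (Tor r {1..n}) (\<lambda>z. S_fac q z (snd p) (fst p))"
      unfolding S_fac_def
    proof (intro continuous_intros ballI)
      fix z assume "z \<in> Tor r {1..n}"
      then have "norm (z (fst p)) = r" "norm (z (snd p)) = r" using ab by (auto simp: Tor_def)
      then show "z (fst p) - q * z (snd p) - (1 - q) * z (fst p) * z (snd p) \<noteq> 0"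
        using denom_nz[OF r K q] lt by auto
    qed
  qed
  then show ?thesis unfolding FE_def by (simp add: split_beta)
qed

lemma FE_C1:
  assumes r: "0 < r" and K: "norm q + norm (1 - q) * r < 1" and q: "q \<noteq> 0"
    and E: "E \<subseteq> {(a, b). 1 \<le> a \<and> a < b \<and> b \<le> Suc m}" and z: "z \<in> Tor r {1..m}"
  shows "C1 (ball 0 (r / (norm q + norm (1 - q) * r))) (\<lambda>w. FE q E (z(Suc m := w)))"
proof -
  let ?S = "ball 0 (r / (norm q + norm (1 - q) * r))"
  have fin: "finite E" by (rule finite_subset[OF E]) (rule finite_subset[of _ "{1..Suc m} \<times> {1..Suc m}"], auto)
  have "C1 ?S (\<lambda>w. \<Prod>p\<in>E. (\<lambda>p w. S_fac q (z(Suc m := w)) (snd p) (fst p)) p w)"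
  proof (rule C1_prod[OF fin])
    fix p assume p: "p \<in> E"
    then have a: "fst p \<in> {1..m}" and b: "snd p \<le> Suc m" "fst p < snd p" using E by auto
    have za: "norm (z (fst p)) = r" using a z by (auto simp: Tor_def)
    show "C1 ?S ((\<lambda>p w. S_fac q (z(Suc m := w)) (snd p) (fst p)) p)"
    proof (cases "snd p = Suc m")
      case True
      have eq: "(\<lambda>w. S_fac q (z(Suc m := w)) (snd p) (fst p)) =
        (\<lambda>w. - ((w - q * z (fst p) - (1 - q) * z (fst p) * w) / (z (fst p) - q * w - (1 - q) * z (fst p) * w)))"
        using True a by (auto simp: S_fac_def fun_eq_iff)
      show ?thesis unfolding eq
      proof (rule C1_minus, rule C1_divide)
        show "C1 ?S (\<lambda>w. w - q * z (fst p) - (1 - q) * z (fst p) * w)"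
          by (intro C1_diff C1_mult C1_const C1_id)
        show "C1 ?S (\<lambda>w. z (fst p) - q * w - (1 - q) * z (fst p) * w)"
          by (intro C1_diff C1_mult C1_const C1_id)
        fix x :: complex assume "x \<in> ?S"
        then show "z (fst p) - q * x - (1 - q) * z (fst p) * x \<noteq> 0"
          using denom_nz[OF r K q za] by simp
      qed
    next
      case False
      then have eq: "(\<lambda>w. S_fac q (z(Suc m := w)) (snd p) (fst p)) = (\<lambda>w. S_fac q z (snd p) (fst p))"
        using a b by (auto simp: S_fac_def fun_eq_iff)
      show ?thesis by (simp only: eq C1_const)
    qed
  qed
  then show ?thesis by (simp add: FE_def split_beta)
qed

lemma FE_zero:
  assumes r: "0 < r" and E: "E \<subseteq> {(a, b). 1 \<le> a \<and> a < b \<and> b \<le> Suc m}" and z: "z \<in> Tor r {1..m}"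
  shows "FE q E (z(Suc m := 0)) = q ^ card {p\<in>E. snd p = Suc m} * FE q {p\<in>E. snd p \<le> m} z"
proof -
  let ?E1 = "{p\<in>E. snd p \<le> m}" and ?E2 = "{p\<in>E. snd p = Suc m}"
  have fin: "finite E" by (rule finite_subset[OF E]) (rule finite_subset[of _ "{1..Suc m} \<times> {1..Suc m}"], auto)
  have Eu: "E = ?E1 \<union> ?E2" using E by auto
  have "FE q E (z(Suc m := 0)) = FE q ?E1 (z(Suc m := 0)) * FE q ?E2 (z(Suc m := 0))"
    unfolding FE_def by (subst Eu, rule prod.union_disjoint) (use fin in auto)
  also have "FE q ?E1 (z(Suc m := 0)) = FE q ?E1 z"
    unfolding FE_def using E by (intro prod.cong) (auto simp: S_fac_def)
  also have "FE q ?E2 (z(Suc m := 0)) = (\<Prod>p\<in>?E2. q)"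
    unfolding FE_def
  proof (intro prod.cong refl)
    fix p assume p: "p \<in> ?E2"
    obtain a b where pab: "p = (a, b)" by fastforce
    with p E have ab: "b = Suc m" "a \<in> {1..m}" by auto
    then have "norm (z a) = r" using z by (auto simp: Tor_def)
    then have "z a \<noteq> 0" using r by auto
    then show "(case p of (a, b) \<Rightarrow> S_fac q (z(Suc m := 0)) b a) = q"
      using ab by (simp add: pab S_fac_def)
  qed
  finally show ?thesis by (simp only: prod_constant mult.commute)
qed

lemma main_lemma:
  assumes r: "0 < r" and K: "norm q + norm (1 - q) * r < 1" and q: "q \<noteq> 0"
  shows "E \<subseteq> {(a, b). 1 \<le> a \<and> a < b \<and> b \<le> n} \<Longrightarrow> Itb r n (FE q E) (\<lambda>_. 0) = q ^ card E"
proof (induction n arbitrary: E)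
  case 0
  then have "E = {}" by auto
  then show ?case by (simp add: FE_def)
next
  case (Suc m)
  let ?E1 = "{p\<in>E. snd p \<le> m}" and ?E2 = "{p\<in>E. snd p = Suc m}"
  have fin: "finite E" by (rule finite_subset[OF Suc.prems]) (rule finite_subset[of _ "{1..Suc m} \<times> {1..Suc m}"], auto)
  have Kp: "norm q + norm (1 - q) * r > 0" using q r by (simp add: add_pos_nonneg)
  have lt: "r < r / (norm q + norm (1 - q) * r)"
  proof -
    have "r * (norm q + norm (1 - q) * r) < r * 1" by (rule mult_strict_left_mono[OF K r])
    then show ?thesis by (simp add: pos_less_divide_eq[OF Kp])
  qed
  have "Itb r (Suc m) (FE q E) (\<lambda>_. 0) = integral {0..1} (\<lambda>u. Itb r m (FE q E) ((\<lambda>_. 0)(Suc m := of_real r * ee u)))"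
    by simp
  also have "\<dots> = Itb r m (\<lambda>z. integral {0..1} (\<lambda>u. FE q E (z(Suc m := of_real r * ee u)))) (\<lambda>_. 0)"
    by (rule Itb_swap[where I="{1..Suc m}"]) (use r FE_cont[OF r K q Suc.prems] in \<open>auto simp: Tor_def\<close>)
  also have "\<dots> = Itb r m (\<lambda>z. q ^ card ?E2 * FE q ?E1 z) (\<lambda>_. 0)"
  proof (rule Itb_cong[where I="{1..m}"])
    fix z assume z: "z \<in> Tor r {1..m}"
    have "integral {0..1} (\<lambda>u. FE q E (z(Suc m := of_real r * ee u))) = FE q E (z(Suc m := 0))"
      using mvp[OF FE_C1[OF r K q Suc.prems z] r lt] by simp
    also have "\<dots> = q ^ card ?E2 * FE q ?E1 z" by (rule FE_zero[OF r Suc.prems z])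
    finally show "integral {0..1} (\<lambda>u. FE q E (z(Suc m := of_real r * ee u))) = q ^ card ?E2 * FE q ?E1 z" .
  qed (use r in \<open>auto simp: Tor_def\<close>)
  also have "\<dots> = q ^ card ?E2 * q ^ card ?E1"
  proof -
    have "Itb r m (FE q ?E1) (\<lambda>_. 0) = q ^ card ?E1"
      by (rule Suc.IH) (use Suc.prems in auto)
    then show ?thesis by (simp add: Itb_mult)
  qed
  also have "\<dots> = q ^ card E"
  proof -
    have Eu: "E = ?E1 \<union> ?E2" using Suc.prems by auto
    have "card E = card ?E1 + card ?E2"
      by (subst Eu, rule card_Un_disjoint) (use fin in auto)
    then show ?thesis by (simp add: power_add mult.commute)
  qed
  finally show ?case .
qed

definition ov :: "(nat \<Rightarrow> complex) \<Rightarrow> nat \<Rightarrow> (nat \<Rightarrow> complex) \<Rightarrow> (nat \<Rightarrow> complex)" where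
  "ov b k z = (\<lambda>i. if i \<in> {1..k} then z i else b i)"

lemma ee_nz [simp]: "ee t \<noteq> 0"
  unfolding ee_def by simp

lemma conv:
  assumes r: "r \<noteq> 0"
  shows "iter_circle_integral r k (\<lambda>z. G (ov b k z) * (\<Prod>i=1..k. inverse (z i))) = (2 * of_real pi * \<i>) ^ k * Itb r k G b"
proof (induction k arbitrary: G b)
  case 0
  then show ?case by (simp add: ov_def)
next
  case (Suc k)
  have A: "ov b (Suc k) (z(Suc k := w)) = ov (b(Suc k := w)) k z" for w z
    by (auto simp: ov_def fun_eq_iff)
  have B: "(\<Prod>i=1..Suc k. inverse ((z(Suc k := w)) i)) = inverse w * (\<Prod>i=1..k. inverse (z i))" for w z
  proof -
    have "(\<Prod>i=1..Suc k. inverse ((z(Suc k := w)) i)) = (\<Prod>i=1..k. inverse ((z(Suc k := w)) i)) * inverse w"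
      by (simp add: prod.cl_ivl_Suc)
    also have "(\<Prod>i=1..k. inverse ((z(Suc k := w)) i)) = (\<Prod>i=1..k. inverse (z i))"
      by (intro prod.cong) auto
    finally show ?thesis by (simp add: mult.commute)
  qed
  have C: "iter_circle_integral r k (\<lambda>z. G (ov b (Suc k) (z(Suc k := w))) * (\<Prod>i=1..Suc k. inverse ((z(Suc k := w)) i)))
     = (2 * of_real pi * \<i>) ^ k * (inverse w * Itb r k G (b(Suc k := w)))" for w
  proof -
    have "(\<lambda>z. G (ov b (Suc k) (z(Suc k := w))) * (\<Prod>i=1..Suc k. inverse ((z(Suc k := w)) i)))
        = (\<lambda>z. (\<lambda>y. inverse w * G y) (ov (b(Suc k := w)) k z) * (\<Prod>i=1..k. inverse (z i)))"
      by (simp only: A B mult_ac)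
    then have "iter_circle_integral r k (\<lambda>z. G (ov b (Suc k) (z(Suc k := w))) * (\<Prod>i=1..Suc k. inverse ((z(Suc k := w)) i)))
       = iter_circle_integral r k (\<lambda>z. (\<lambda>y. inverse w * G y) (ov (b(Suc k := w)) k z) * (\<Prod>i=1..k. inverse (z i)))"
      by (rule arg_cong)
    also have "\<dots> = (2 * of_real pi * \<i>) ^ k * Itb r k (\<lambda>y. inverse w * G y) (b(Suc k := w))"
      by (rule Suc.IH[of "\<lambda>y. inverse w * G y" "b(Suc k := w)"])
    finally show ?thesis by (simp only: Itb_mult)
  qed
  have "iter_circle_integral r (Suc k) (\<lambda>z. G (ov b (Suc k) z) * (\<Prod>i=1..Suc k. inverse (z i)))
      = circle_integral r (\<lambda>w. (2 * of_real pi * \<i>) ^ k * (inverse w * Itb r k G (b(Suc k := w))))"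
    by (simp only: iter_circle_integral.simps C)
  also have "\<dots> = integral {0..1} (\<lambda>t. ((2 * of_real pi * \<i>) ^ k * (inverse (of_real r * ee t) * Itb r k G (b(Suc k := of_real r * ee t))))
             * (2 * of_real pi * \<i> * of_real r * ee t))"
    by (simp add: circle_integral_def ee_def)
  also have "\<dots> = integral {0..1} (\<lambda>t. (2 * of_real pi * \<i>) ^ Suc k * Itb r k G (b(Suc k := of_real r * ee t)))"
    by (rule integral_cong) (use r in \<open>simp add: field_simps\<close>)
  also have "\<dots> = (2 * of_real pi * \<i>) ^ Suc k * Itb r (Suc k) G b"
    by simp
  finally show ?case .
qed

theorem mainTheorem5:
  fixes n :: nat and q :: complex and r :: real and \<sigma> :: "nat \<Rightarrow> nat"
  assumes "n \<ge> 1"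
    and "0 < norm q" and "norm q < 1"
    and "0 < r" and "r < (1 - norm q) / norm (1 - q)"
    and "\<sigma> permutes {1..n}"
  shows "(1 / (2 * of_real pi * \<i>)) ^ n *
           iter_circle_integral r n (\<lambda>z. A_perm q n \<sigma> z * (\<Prod>i=1..n. inverse (z i)))
         = q ^ card (inversions n \<sigma>)"
proof -
  have q0: "q \<noteq> 0" using assms(2) by auto
  have q1: "norm (1 - q) > 0"
  proof -
    have "q \<noteq> 1" using assms(3) by auto
    then show ?thesis by simp
  qed
  have "r * norm (1 - q) < 1 - norm q"
    using assms(5) by (simp add: pos_less_divide_eq[OF q1])
  then have K: "norm q + norm (1 - q) * r < 1" by (simp add: mult.commute)
  let ?E = "inversions n \<sigma>"
  have E: "?E \<subseteq> {(a, b). 1 \<le> a \<and> a < b \<and> b \<le> n}" by (auto simp: inversions_def)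
  have eq: "(\<lambda>z. A_perm q n \<sigma> z * (\<Prod>i=1..n. inverse (z i)))
     = (\<lambda>z. FE q ?E (ov (\<lambda>_. 0) n z) * (\<Prod>i=1..n. inverse (z i)))"
  proof (rule ext)
    fix z
    have "FE q ?E (ov (\<lambda>_. 0) n z) = FE q ?E z"
      unfolding FE_def using E by (intro prod.cong refl) (auto simp: ov_def S_fac_def)
    then show "A_perm q n \<sigma> z * (\<Prod>i=1..n. inverse (z i)) = FE q ?E (ov (\<lambda>_. 0) n z) * (\<Prod>i=1..n. inverse (z i))"
      by (simp add: A_perm_def FE_def)
  qed
  have "iter_circle_integral r n (\<lambda>z. A_perm q n \<sigma> z * (\<Prod>i=1..n. inverse (z i)))
      = (2 * of_real pi * \<i>) ^ n * Itb r n (FE q ?E) (\<lambda>_. 0)"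
    unfolding eq using assms(4) by (intro conv) auto
  also have "Itb r n (FE q ?E) (\<lambda>_. 0) = q ^ card ?E"
    by (rule main_lemma[OF assms(4) K q0 E])
  finally show ?thesis by (simp add: power_divide flip: power_mult_distrib)
qed

end
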